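(* Let $N\ge 2$ be an integer and $\kappa,m>0$. For every fixed $k_1\in\mathbb{Z}\cap(0,N)$, $$\sum_{\substack{k_2,k_3,k_4\in\mathbb{Z}\cap(0,N)\\ k_1-k_2-k_3-k_4\equiv 0\ (\mathrm{mod}\ N)}}\big|A^{(1)}_{1,2,3,4}\big|^2+\sum_{\substack{k_2,k_3,k_4\in\mathbb{Z}\cap(0,N)\\ k_1-k_2+k_3+k_4\equiv 0\ (\mathrm{mod}\ N)}}\big|A^{(2)}_{1,2,3,4}\big|^2+\sum_{\substack{k_2,k_3,k_4\in\mathbb{Z}\cap(0,N)\\ k_1+k_2+k_3+k_4\equiv 0\ (\mathrm{mod}\ N)}}\big|A^{(3)}_{1,2,3,4}\big|^2\le C\,N^2\log N,$$ where $C>0$ is a constant depending only on $\kappa$ and $m$ (in particular independent of $N$ and $k_1$).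
   Context: For an integer $N\ge 2$ and constants $\kappa,m>0$, define for $k\in\mathbb{Z}$ the frequency $\omega_k=2\sqrt{\kappa/m}\,\big|\sin(\pi k/N)\big|$ and the $2N$-periodic sign function $\iota(x)=\operatorname{sgn}\sin(\pi x/N)$. For integers $k_1,k_2,k_3,k_4$ (abbreviated by their indices $1,2,3,4$) set $$T_{1,2,3,4}=-\frac{3}{4\kappa^2}\,\iota(k_2+k_3+k_4)\,\iota(k_2)\,\iota(k_3)\,\iota(k_4)\prod_{i=1}^4\sqrt{\omega_{k_i}},$$ and let $T_{1,-2,3,4}$ denote the same expression with $k_2$ replaced by $-k_2$, i.e. $-\frac{3}{4\kappa^2}\iota(-k_2+k_3+k_4)\iota(-k_2)\iota(k_3)\iota(k_4)\prod_{i=1}^4\sqrt{\omega_{k_i}}$. Define $$A^{(1)}_{1,2,3,4}=-\frac{T_{1,2,3,4}}{\omega_{k_1}-\omega_{k_2}-\omega_{k_3}-\omega_{k_4}},\quad A^{(2)}_{1,2,3,4}=-\frac{T_{1,-2,3,4}}{\omega_{k_1}-\omega_{k_2}+\omega_{k_3}+\omega_{k_4}},\quad A^{(3)}_{1,2,3,4}=-\frac{T_{1,2,3,4}}{\omega_{k_1}+\omega_{k_2}+\omega_{k_3}+\omega_{k_4}}.$$ On the respective summation ranges (all $k_i\in\mathbb{Z}\cap(0,N)$ with the stated congruence mod $N$) the denominators do not vanish. These are the coefficients of the normal form transformation removing non-resonant quartic terms in the $\beta$-FPUT chain. *)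

theory Defs
  imports Complex_Main
begin

definition omega :: "real \<Rightarrow> real \<Rightarrow> int \<Rightarrow> int \<Rightarrow> real" where
  "omega \<kappa> m N k = 2 * sqrt (\<kappa> / m) * \<bar>sin (pi * real_of_int k / real_of_int N)\<bar>"

definition iota :: "int \<Rightarrow> int \<Rightarrow> real" where
  "iota N x = sgn (sin (pi * real_of_int x / real_of_int N))"

definition Tc :: "real \<Rightarrow> real \<Rightarrow> int \<Rightarrow> int \<Rightarrow> int \<Rightarrow> int \<Rightarrow> int \<Rightarrow> real" where
  "Tc \<kappa> m N k1 k2 k3 k4 =
     - 3 / (4 * \<kappa>^2) * iota N (k2 + k3 + k4) * iota N k2 * iota N k3 * iota N k4
     * sqrt (omega \<kappa> m N k1) * sqrt (omega \<kappa> m N k2)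
     * sqrt (omega \<kappa> m N k3) * sqrt (omega \<kappa> m N k4)"

text \<open>T_{1,-2,3,4}: the same expression with k2 replaced by -k2 in the iota factors,
  exactly as written in the paper (the omega product uses k2; omega is even anyway).\<close>
definition Tm :: "real \<Rightarrow> real \<Rightarrow> int \<Rightarrow> int \<Rightarrow> int \<Rightarrow> int \<Rightarrow> int \<Rightarrow> real" where
  "Tm \<kappa> m N k1 k2 k3 k4 =
     - 3 / (4 * \<kappa>^2) * iota N (- k2 + k3 + k4) * iota N (- k2) * iota N k3 * iota N k4
     * sqrt (omega \<kappa> m N k1) * sqrt (omega \<kappa> m N k2)
     * sqrt (omega \<kappa> m N k3) * sqrt (omega \<kappa> m N k4)"

definition A1 :: "real \<Rightarrow> real \<Rightarrow> int \<Rightarrow> int \<Rightarrow> int \<Rightarrow> int \<Rightarrow> int \<Rightarrow> real" where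
  "A1 \<kappa> m N k1 k2 k3 k4 = - Tc \<kappa> m N k1 k2 k3 k4 /
     (omega \<kappa> m N k1 - omega \<kappa> m N k2 - omega \<kappa> m N k3 - omega \<kappa> m N k4)"

definition A2 :: "real \<Rightarrow> real \<Rightarrow> int \<Rightarrow> int \<Rightarrow> int \<Rightarrow> int \<Rightarrow> int \<Rightarrow> real" where
  "A2 \<kappa> m N k1 k2 k3 k4 = - Tm \<kappa> m N k1 k2 k3 k4 /
     (omega \<kappa> m N k1 - omega \<kappa> m N k2 + omega \<kappa> m N k3 + omega \<kappa> m N k4)"

definition A3 :: "real \<Rightarrow> real \<Rightarrow> int \<Rightarrow> int \<Rightarrow> int \<Rightarrow> int \<Rightarrow> int \<Rightarrow> real" where
  "A3 \<kappa> m N k1 k2 k3 k4 = - Tc \<kappa> m N k1 k2 k3 k4 /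
     (omega \<kappa> m N k1 + omega \<kappa> m N k2 + omega \<kappa> m N k3 + omega \<kappa> m N k4)"

end

theory Submission
  imports Defs
begin


lemma cos_ge_aux: fixes x :: real assumes "x \<ge> 0" shows "cos x \<ge> 1 - x^2/2"
proof -
  let ?f = "\<lambda>x. cos x - 1 + x^2/2"
  have "\<And>u. \<lbrakk>0 \<le> u; u \<le> x\<rbrakk> \<Longrightarrow> (?f has_real_derivative (u - sin u)) (at u)"
    by (auto intro!: derivative_eq_intros simp: field_simps)
  moreover have "\<And>u. \<lbrakk>0 \<le> u; u \<le> x\<rbrakk> \<Longrightarrow> u - sin u \<ge> 0" using sin_x_le_x by auto
  ultimately have "?f x \<ge> ?f 0"
    by (intro DERIV_nonneg_imp_nondecreasing[OF assms]) blast
  then show ?thesis by simp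
qed

lemma sin_ge_aux: fixes x :: real assumes "x \<ge> 0" shows "sin x \<ge> x - x^3/6"
proof -
  let ?f = "\<lambda>x. sin x - x + x^3/6"
  have "\<And>u. \<lbrakk>0 \<le> u; u \<le> x\<rbrakk> \<Longrightarrow> (?f has_real_derivative (cos u - 1 + u^2/2)) (at u)"
    by (auto intro!: derivative_eq_intros simp: field_simps power2_eq_square)
  moreover have "\<And>u. \<lbrakk>0 \<le> u; u \<le> x\<rbrakk> \<Longrightarrow> cos u - 1 + u^2/2 \<ge> 0" using cos_ge_aux by force
  ultimately have "?f x \<ge> ?f 0"
    by (intro DERIV_nonneg_imp_nondecreasing[OF assms]) blast
  then show ?thesis by simp
qed

lemma sin_lin: fixes y :: real assumes "0 \<le> y" "y \<le> pi/2" shows "sin y \<ge> y/3"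
proof -
  have "y \<le> 2" using assms pi_less_4 by linarith
  hence "y*y \<le> 2*2" using assms by (intro mult_mono) auto
  hence "y * (1 - y*y/6) \<ge> y * (1/3)" using assms by (intro mult_left_mono) auto
  hence "y - y^3/6 \<ge> y/3" by (simp add: power3_eq_cube algebra_simps)
  thus ?thesis using sin_ge_aux[OF assms(1)] by linarith
qed

lemma ident3: fixes b c d :: real
  shows "sin b + sin c + sin d - sin (b+c+d) = 4 * sin ((b+c)/2) * sin ((c+d)/2) * sin ((b+d)/2)"
proof -
  have 1: "sin b + sin c = 2 * sin ((b+c)/2) * cos ((b-c)/2)" by (rule sin_plus_sin)
  have 2: "sin d - sin (b+c+d) = 2 * sin ((d - (b+c+d))/2) * cos ((d + (b+c+d))/2)" by (rule sin_diff_sin)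
  have 3: "sin ((d - (b+c+d))/2) = - sin ((b+c)/2)"
  proof -
    have "sin ((d - (b+c+d))/2) = sin (- ((b+c)/2))" by (rule arg_cong[where f=sin]) (simp add: field_simps)
    thus ?thesis by (simp only: sin_minus)
  qed
  have 4: "cos ((b-c)/2) - cos ((d + (b+c+d))/2) = 2 * sin (((b-c)/2 + (d + (b+c+d))/2)/2) * sin (((d + (b+c+d))/2 - (b-c)/2)/2)"
    by (rule cos_diff_cos)
  have 5: "((b-c)/2 + (d + (b+c+d))/2)/2 = (b+d)/2" "((d + (b+c+d))/2 - (b-c)/2)/2 = (c+d)/2" by (simp_all add: field_simps)
  define S where "S = sin ((b+c)/2)"
  define W where "W = cos ((d + (b+c+d))/2)"
  have "sin b + sin c + sin d - sin (b+c+d) = (sin b + sin c) + (sin d - sin (b+c+d))" by simp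
  also have "\<dots> = 2*S*cos ((b-c)/2) + 2*(-S)*W" unfolding 1 2 3 S_def W_def by simp
  also have "\<dots> = 2*S*(cos ((b-c)/2) - W)" by (simp add: right_diff_distrib)
  also have "cos ((b-c)/2) - W = 2 * sin ((b+d)/2) * sin ((c+d)/2)" unfolding W_def 4 5 by simp
  finally show ?thesis unfolding S_def by simp
qed

lemma poly6: fixes b c d :: real assumes "b \<ge> 0" "c \<ge> 0" "d \<ge> 0"
  shows "(b+c+d)^3 * (b*c*d) \<le> 27/64 * ((b+c)*(c+d)*(b+d))^2"
proof -
  have e1: "(b+c)*(c+d)*(b+d) = (b+c+d)*(b*c+c*d+d*b) - b*c*d" by (simp add: algebra_simps)
  have amgm: "9*(b*c*d) \<le> (b+c+d)*(b*c+c*d+d*b)"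
  proof -
    have "(b+c+d)*(b*c+c*d+d*b) - 9*(b*c*d) = b*(c-d)^2 + c*(b-d)^2 + d*(b-c)^2"
      by (simp add: power2_eq_square algebra_simps)
    moreover have "b*(c-d)^2 + c*(b-d)^2 + d*(b-c)^2 \<ge> 0" using assms by simp
    ultimately show ?thesis by linarith
  qed
  have q: "3*(b*c*d)*(b+c+d) \<le> (b*c+c*d+d*b)^2"
  proof -
    have "(b*c+c*d+d*b)^2 - 3*(b*c*d)*(b+c+d) = ((b*c-c*d)^2 + (c*d-d*b)^2 + (b*c-d*b)^2)/2"
      by (simp add: power2_eq_square algebra_simps)
    moreover have "((b*c-c*d)^2 + (c*d-d*b)^2 + (b*c-d*b)^2)/2 \<ge> 0" by simp
    ultimately show ?thesis by linarith
  qed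
  have p0: "(b+c)*(c+d)*(b+d) \<ge> 8/9 * ((b+c+d)*(b*c+c*d+d*b))" using e1 amgm by linarith
  define X where "X = b+c+d"
  define Y where "Y = b*c+c*d+d*b"
  define P where "P = (b+c)*(c+d)*(b+d)"
  define Z where "Z = b*c*d"
  have X0: "X \<ge> 0" using assms X_def by simp
  have p: "P \<ge> 8/9 * (X*Y)" using p0 by (simp add: P_def X_def Y_def)
  have nn: "0 \<le> 8/9 * (X*Y)" using assms X_def Y_def by simp
  have "(8/9 * (X*Y))^2 \<le> P^2"
    using p nn by (simp add: power_mono)
  moreover have "(8/9 * (X*Y))^2 = 64/81 * X^2 * Y^2" by (simp add: power2_eq_square)
  moreover have "64/81 * X^2 * (3*Z*X) \<le> 64/81 * X^2 * Y^2"
      using q unfolding X_def Y_def Z_def by (intro mult_left_mono) auto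
  moreover have "64/81 * X^2 * (3*Z*X) = X^3*Z*(64/27)" by (simp add: power2_eq_square power3_eq_cube)
  ultimately have "X^3*Z \<le> 27/64 * P^2" by linarith
  thus ?thesis using X_def P_def Z_def by simp
qed
lemma case0: fixes b c d :: real assumes "0<b" "0<c" "0<d" "b+c+d<pi"
  shows "sin(b+c+d)*sin b*sin c*sin d*(b+c+d)^2 \<le> 1300*(sin b + sin c + sin d - sin(b+c+d))^2"
proof -
  define a where "a = b+c+d"
  have h1: "sin ((b+c)/2) \<ge> (b+c)/6" using sin_lin[of "(b+c)/2"] assms by auto
  have h2: "sin ((c+d)/2) \<ge> (c+d)/6" using sin_lin[of "(c+d)/2"] assms by auto
  have h3: "sin ((b+d)/2) \<ge> (b+d)/6" using sin_lin[of "(b+d)/2"] assms by auto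
  have "((b+c)/6)*((c+d)/6)*((b+d)/6) \<le> sin ((b+c)/2) * sin ((c+d)/2) * sin ((b+d)/2)"
    using h1 h2 h3 assms by (intro mult_mono) auto
  hence D: "(b+c)*(c+d)*(b+d)/54 \<le> sin b + sin c + sin d - sin(b+c+d)"
    unfolding ident3 by simp
  define P where "P = (b+c)*(c+d)*(b+d)"
  have P0: "P \<ge> 0" using assms P_def by simp
  have D2: "(P/54)^2 \<le> (sin b + sin c + sin d - sin(b+c+d))^2"
    using D P0 unfolding P_def by (intro power_mono) auto
  have sa: "0 \<le> sin a" "sin a \<le> a" using assms a_def sin_ge_zero sin_x_le_x by auto
  have sb: "0 \<le> sin b" "sin b \<le> b" using assms sin_ge_zero sin_x_le_x by auto
  have sc: "0 \<le> sin c" "sin c \<le> c" using assms sin_ge_zero sin_x_le_x by auto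
  have sd: "0 \<le> sin d" "sin d \<le> d" using assms sin_ge_zero sin_x_le_x by auto
  have "sin a*sin b*sin c*sin d \<le> a*b*c*d"
    using sa sb sc sd by (intro mult_mono) (auto intro: mult_nonneg_nonneg)
  hence "sin a*sin b*sin c*sin d*a^2 \<le> a*b*c*d*a^2" by (intro mult_right_mono) auto
  also have "a*b*c*d*a^2 = a^3*(b*c*d)" by (simp add: power2_eq_square power3_eq_cube)
  also have "\<dots> \<le> 27/64 * P^2" unfolding a_def P_def using poly6 assms by simp
  also have "\<dots> = 27*2916/64 * (P/54)^2" by (simp add: power2_eq_square)
  also have "\<dots> \<le> 27*2916/64 * (sin b + sin c + sin d - sin(b+c+d))^2" using D2 by simp
  also have "\<dots> \<le> 1300 * (sin b + sin c + sin d - sin(b+c+d))^2" by simp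
  finally show ?thesis unfolding a_def .
qed

lemma case1: fixes a b c d :: real
  assumes "0<a" "a<pi" "0<b" "b<pi" "0<c" "c<pi" "0<d" "d<pi" "a + pi = b+c+d"
  shows "sin a*sin b*sin c*sin d \<le> (sin b + sin c + sin d - sin a)^2"
proof -
  define p where "p = (b+c)/2"
  define v where "v = (b-c)/2"
  define w where "w = (a - (pi - d))/2"
  have eb: "b = p+v" and ec: "c = p-v" and ea: "a = p+w" and ed: "pi - d = p - w"
    using assms by (simp_all add: p_def v_def w_def field_simps)
  have sd: "sin d = sin (p - w)" using ed by (metis sin_pi_minus)
  have pyth: "sin p ^2 + cos p ^2 = 1" "sin v ^2 + cos v^2 = 1" "sin w^2 + cos w^2 = 1" by simp_all
  have gen1: "\<And>sp cp sv cv::real. sp^2 = 1 - cp^2 \<Longrightarrow> sv^2 = 1 - cv^2 \<Longrightarrow>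
      (sp*cv + cp*sv)*(sp*cv - cp*sv) = cv^2 - cp^2"
  proof -
    fix sp cp sv cv :: real assume h: "sp^2 = 1 - cp^2" "sv^2 = 1 - cv^2"
    have "(sp*cv + cp*sv)*(sp*cv - cp*sv) = sp^2*cv^2 - cp^2*sv^2" by (simp add: power2_eq_square algebra_simps)
    also have "\<dots> = (1 - cp^2)*cv^2 - cp^2*(1 - cv^2)" unfolding h ..
    also have "\<dots> = cv^2 - cp^2" by (simp add: algebra_simps)
    finally show "(sp*cv + cp*sv)*(sp*cv - cp*sv) = cv^2 - cp^2" .
  qed
  have gen2: "\<And>sp cp sw cw::real. cp^2 = 1 - sp^2 \<Longrightarrow> cw^2 = 1 - sw^2 \<Longrightarrow>
      (sp*cw + cp*sw)*(sp*cw - cp*sw) = sp^2 - sw^2"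
  proof -
    fix sp cp sw cw :: real assume h: "cp^2 = 1 - sp^2" "cw^2 = 1 - sw^2"
    have "(sp*cw + cp*sw)*(sp*cw - cp*sw) = sp^2*cw^2 - cp^2*sw^2" by (simp add: power2_eq_square algebra_simps)
    also have "\<dots> = sp^2*(1 - sw^2) - (1 - sp^2)*sw^2" unfolding h ..
    also have "\<dots> = sp^2 - sw^2" by (simp add: algebra_simps)
    finally show "(sp*cw + cp*sw)*(sp*cw - cp*sw) = sp^2 - sw^2" .
  qed
  have bc: "sin b * sin c = cos v ^2 - cos p ^2"
    unfolding eb ec sin_add sin_diff by (rule gen1) (simp_all add: sin_squared_eq)
  have ad: "sin a * sin d = sin p ^2 - sin w ^2"
    unfolding ea sd sin_add sin_diff by (rule gen2) (simp_all add: cos_squared_eq)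
  have DD: "sin b + sin c + sin d - sin a = 2*(sin p * cos v - cos p * sin w)"
    unfolding eb ec ea sd sin_add sin_diff by (simp add: algebra_simps)
  define A where "A = cos v"
  define B where "B = \<bar>cos p\<bar>"
  define S where "S = sin p"
  define T where "T = \<bar>sin w\<bar>"
  have A0: "A > 0" unfolding A_def v_def using assms by (intro cos_gt_zero_pi) auto
  have S0: "S > 0" unfolding S_def p_def using assms by (intro sin_gt_zero) auto
  have B0: "B \<ge> 0" and T0: "T \<ge> 0" unfolding B_def T_def by auto
  have "sin b > 0" "sin c > 0" "sin a > 0" "sin d > 0" using assms by (auto intro: sin_gt_zero)
  hence pos1: "sin b * sin c > 0" and pos2: "sin a * sin d > 0" by auto
  have AB2: "A^2 - B^2 = sin b * sin c" unfolding bc A_def B_def by simp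
  have ST2: "S^2 - T^2 = sin a * sin d" unfolding ad S_def T_def by simp
  have AB: "A > B"
  proof (rule ccontr)
    assume "\<not> A > B" hence "A^2 \<le> B^2" using A0 by (intro power_mono) auto
    thus False using AB2 pos1 by linarith
  qed
  have ST: "S > T"
  proof (rule ccontr)
    assume "\<not> S > T" hence "S^2 \<le> T^2" using S0 by (intro power_mono) auto
    thus False using ST2 pos2 by linarith
  qed
  have "cos p * sin w \<le> B * T" unfolding B_def T_def by (metis abs_ge_self abs_mult)
  hence E: "sin p * cos v - cos p * sin w \<ge> S*A - B*T" unfolding S_def A_def by linarith
  have "S*A - B*T - S*(A-B) = B*(S-T)" by (simp add: algebra_simps)
  moreover have "B*(S-T) \<ge> 0" using B0 ST by simp
  ultimately have e1: "S*A - B*T \<ge> S*(A-B)" by linarith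
  have "S*A - B*T - A*(S-T) = T*(A-B)" by (simp add: algebra_simps)
  moreover have "T*(A-B) \<ge> 0" using T0 AB by simp
  ultimately have e2: "S*A - B*T \<ge> A*(S-T)" by linarith
  have "sin a*sin b*sin c*sin d = (A^2-B^2)*(S^2-T^2)" using AB2 ST2 by (simp add: algebra_simps)
  also have "\<dots> = ((A-B)*(S-T))*((A+B)*(S+T))" by (simp add: power2_eq_square algebra_simps)
  also have "\<dots> \<le> ((A-B)*(S-T))*((2*A)*(2*S))"
  proof -
    have "(A+B)*(S+T) \<le> (2*A)*(2*S)" using AB ST B0 T0 A0 S0 by (intro mult_mono) auto
    thus ?thesis using AB ST by (intro mult_left_mono) auto
  qed
  also have "\<dots> = ((A-B)*(S-T))*(4*(A*S))" by simp
  also have "\<dots> = 4*((S*(A-B))*(A*(S-T)))" by (simp add: algebra_simps)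
  also have "\<dots> \<le> 4*((S*A - B*T)*(S*A - B*T))"
  proof -
    have nn: "S*(A-B) \<ge> 0" "A*(S-T) \<ge> 0" using AB ST A0 S0 by auto
    hence e0: "S*A - B*T \<ge> 0" using e1 by linarith
    show ?thesis using e1 e2 nn e0 by (intro mult_left_mono mult_mono) auto
  qed
  also have "\<dots> \<le> 4*((sin p * cos v - cos p * sin w)^2)"
  proof -
    have "S*A - B*T \<ge> 0" using e1 AB S0 by (smt (verit) mult_pos_pos)
    hence "(S*A-B*T)^2 \<le> (sin p*cos v - cos p*sin w)^2" using E by (intro power_mono) auto
    thus ?thesis by (simp add: power2_eq_square)
  qed
  also have "\<dots> = (sin b + sin c + sin d - sin a)^2"
  proof -
    have q: "\<And>X::real. 4*(X^2) = (2*X)^2" by (simp add: power2_eq_square)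
    show ?thesis unfolding DD by (rule q)
  qed
  finally show ?thesis .
qed
lemma core: fixes a b c d :: real and j :: int
  assumes "0<a" "a<pi" "0<b" "b<pi" "0<c" "c<pi" "0<d" "d<pi" "a = b+c+d - j*pi" "j=0 \<or> j=1 \<or> j=2"
  shows "sin a*sin b*sin c*sin d \<le> (sin b + sin c + sin d - sin a)^2 * (1 + 1300/(max b c)^2 + 1300/(max (pi-b) (pi-c))^2)"
proof -
  define D2 where "D2 = (sin b + sin c + sin d - sin a)^2"
  have D0: "D2 \<ge> 0" unfolding D2_def by simp
  define G1 where "G1 = 1300/(max b c)^2"
  define G2 where "G2 = 1300/(max (pi-b) (pi-c))^2"
  have G10: "G1 \<ge> 0" and G20: "G2 \<ge> 0" unfolding G1_def G2_def by auto
  have main: "sin a*sin b*sin c*sin d \<le> D2 * (1 + G1 + G2)"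
  using assms(10) proof (elim disjE)
    assume j: "j=0"
    hence ea: "a = b+c+d" using assms by simp
    have h: "sin a*sin b*sin c*sin d*a^2 \<le> 1300*D2" using case0[of b c d] assms ea unfolding D2_def by simp
    have M: "0 < max b c" "max b c \<le> a" using assms ea by auto
    have "sin a*sin b*sin c*sin d \<le> 1300*D2/a^2"
      using h assms(1) by (subst pos_le_divide_eq) auto
    also have "\<dots> \<le> 1300*D2/(max b c)^2"
      using M D0 by (intro divide_left_mono power_mono mult_pos_pos) auto
    also have "\<dots> = D2 * G1" unfolding G1_def by simp
    also have "\<dots> \<le> D2 * (1 + G1 + G2)" using D0 G10 G20 by (intro mult_left_mono) auto
    finally show ?thesis .
  next
    assume j: "j=1"
    hence "a + pi = b+c+d" using assms by simp
    hence "sin a*sin b*sin c*sin d \<le> D2" using case1[of a b c d] assms unfolding D2_def by simp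
    also have "\<dots> \<le> D2 * (1 + G1 + G2)" using D0 G10 G20 by (simp add: mult_le_cancel_left1)
    finally show ?thesis .
  next
    assume j: "j=2"
    hence ea: "pi - a = (pi-b)+(pi-c)+(pi-d)" using assms by simp
    have "sin (pi-a)*sin (pi-b)*sin (pi-c)*sin (pi-d)*(pi-a)^2 \<le> 1300*(sin (pi-b) + sin (pi-c) + sin (pi-d) - sin(pi-a))^2"
      using case0[of "pi-b" "pi-c" "pi-d"] assms ea by simp
    hence h: "sin a*sin b*sin c*sin d*(pi-a)^2 \<le> 1300*D2" unfolding D2_def by simp
    have M: "0 < max (pi-b) (pi-c)" "max (pi-b) (pi-c) \<le> pi - a" using assms ea by auto
    have "sin a*sin b*sin c*sin d \<le> 1300*D2/(pi-a)^2"
      using h assms(2) by (subst pos_le_divide_eq) auto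
    also have "\<dots> \<le> 1300*D2/(max (pi-b) (pi-c))^2"
      using M D0 by (intro divide_left_mono power_mono mult_pos_pos) auto
    also have "\<dots> = D2 * G2" unfolding G2_def by simp
    also have "\<dots> \<le> D2 * (1 + G1 + G2)" using D0 G10 G20 by (intro mult_left_mono) auto
    finally show ?thesis .
  qed
  thus ?thesis unfolding D2_def G1_def G2_def .
qed
lemma Q_step: fixes n :: nat
  shows "(\<Sum>b\<in>{1..int n + 1}. \<Sum>c\<in>{1..int n + 1}. 1/(real_of_int (max b c))^2)
       = (\<Sum>b\<in>{1..int n}. \<Sum>c\<in>{1..int n}. 1/(real_of_int (max b c))^2) + (2*n+1)/(real n+1)^2"
proof -
  define t where "t = int n + 1"
  have I: "{1..t} = insert t {1..int n}" unfolding t_def by auto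
  have tn: "t \<notin> {1..int n}" unfolding t_def by auto
  have r1: "\<And>c. c \<in> {1..t} \<Longrightarrow> 1/(real_of_int (max t c))^2 = 1/(real n+1)^2" unfolding t_def by auto
  have r2: "\<And>b. b \<in> {1..int n} \<Longrightarrow> 1/(real_of_int (max b t))^2 = 1/(real n+1)^2" unfolding t_def by auto
  have "(\<Sum>b\<in>{1..t}. \<Sum>c\<in>{1..t}. 1/(real_of_int (max b c))^2)
      = (\<Sum>c\<in>{1..t}. 1/(real_of_int (max t c))^2) + (\<Sum>b\<in>{1..int n}. \<Sum>c\<in>{1..t}. 1/(real_of_int (max b c))^2)"
    unfolding I using tn by (simp add: sum.insert)
  also have "(\<Sum>c\<in>{1..t}. 1/(real_of_int (max t c))^2) = (n+1)/(real n+1)^2"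
    using r1 by (simp add: t_def)
  also have "(\<Sum>b\<in>{1..int n}. \<Sum>c\<in>{1..t}. 1/(real_of_int (max b c))^2)
     = (\<Sum>b\<in>{1..int n}. 1/(real n+1)^2 + (\<Sum>c\<in>{1..int n}. 1/(real_of_int (max b c))^2))"
    unfolding I using tn r2 by (intro sum.cong) (auto simp: sum.insert)
  also have "\<dots> = n/(real n+1)^2 + (\<Sum>b\<in>{1..int n}. \<Sum>c\<in>{1..int n}. 1/(real_of_int (max b c))^2)"
    by (simp add: sum.distrib)
  finally show ?thesis unfolding t_def by (simp add: add_divide_distrib)
qed

lemma Q_bound: fixes n :: nat assumes "n \<ge> 1"
  shows "(\<Sum>b\<in>{1..int n}. \<Sum>c\<in>{1..int n}. 1/(real_of_int (max b c))^2) \<le> 2 + 2 * ln n"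
  using assms
proof (induction n rule: nat_induct_at_least)
  case base
  then show ?case by simp
next
  case (Suc n)
  have lnn: "ln (real n / (real n + 1)) \<le> real n / (real n + 1) - 1" using Suc by (intro ln_le_minus_one) auto
  have "ln (real n / (real n + 1)) = ln n - ln (real n + 1)" using Suc by (simp add: ln_div)
  moreover have "real n / (real n + 1) - 1 = - 1/(real n + 1)" by (simp add: field_simps)
  ultimately have L: "1/(real n+1) \<le> ln (real n + 1) - ln n" using lnn by linarith
  have "(2*n+1)/(real n+1)^2 \<le> (2*real n+2)/(real n+1)^2"
    by (intro divide_right_mono) auto
  also have "(2*real n+2)/(real n+1)^2 = 2/(real n+1)"
  proof -
    have nz: "(real n + 1)^2 \<noteq> 0" "real n + 1 \<noteq> 0" by simp_all
    show ?thesis by (subst frac_eq_eq[OF nz]) (simp add: power2_eq_square algebra_simps)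
  qed
  finally have "(2*n+1)/(real n+1)^2 \<le> 2/(real n+1)" .
  hence "(\<Sum>b\<in>{1..int n + 1}. \<Sum>c\<in>{1..int n + 1}. 1/(real_of_int (max b c))^2) \<le> 2 + 2*ln n + 2/(real n+1)"
    using Suc.IH Q_step[of n] by linarith
  also have "\<dots> \<le> 2 + 2 * ln (real n + 1)" using L by linarith
  finally have X: "(\<Sum>b\<in>{1..int n + 1}. \<Sum>c\<in>{1..int n + 1}. 1/(real_of_int (max b c))^2) \<le> 2 + 2 * ln (real n + 1)" .
  have e1: "int (Suc n) = int n + 1" and e2: "real (Suc n) = real n + 1" by simp_all
  show ?case unfolding e1 e2 using X .
qed


definition gg :: "int \<Rightarrow> int \<Rightarrow> int \<Rightarrow> real" where
  "gg N b c = 1 + 1300*(real_of_int N)^2/(real_of_int (max b c))^2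
     + 1300*(real_of_int N)^2/(real_of_int (max (N-b) (N-c)))^2"

lemma gg_ge1: "gg N b c \<ge> 1"
  unfolding gg_def by (simp add: add_nonneg_nonneg)

lemma lin_le_pi: fixes k N :: real assumes "k \<ge> 0" "N > 0" shows "k/N \<le> pi*k/N"
proof -
  have "k \<le> pi*k" using assms pi_ge_two by (simp add: mult_le_cancel_right1)
  thus ?thesis using assms by (simp add: divide_right_mono)
qed

lemma inv_sq_le: fixes u v :: real assumes "0 < u" "u \<le> v" shows "1300/v^2 \<le> 1300/u^2"
  using assms by (intro divide_left_mono power_mono mult_pos_pos) auto

lemma kcore: fixes N ka kb kc kd j :: int
  assumes N: "N \<ge> 2" and r: "0<ka" "ka<N" "0<kb" "kb<N" "0<kc" "kc<N" "0<kd" "kd<N"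
    and e: "ka = kb+kc+kd - j*N" and j: "j=0 \<or> j=1 \<or> j=2"
  shows "\<bar>sin (pi*ka/N)\<bar> * \<bar>sin (pi*kb/N)\<bar> * \<bar>sin (pi*kc/N)\<bar> * \<bar>sin (pi*kd/N)\<bar>
    \<le> (\<bar>sin (pi*kb/N)\<bar> + \<bar>sin (pi*kc/N)\<bar> + \<bar>sin (pi*kd/N)\<bar> - \<bar>sin (pi*ka/N)\<bar>)^2 * gg N kb kc"
proof -
  define x where "x = (\<lambda>k::int. pi*k/N)"
  have Np: "real_of_int N > 0" using N by simp
  have xr: "\<And>k. 0 < k \<Longrightarrow> k < N \<Longrightarrow> 0 < x k \<and> x k < pi"
  proof -
    fix k :: int assume "0<k" "k<N"
    hence "real_of_int k / N < 1" "real_of_int k / N > 0" using Np by (auto simp: field_simps)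
    thus "0 < x k \<and> x k < pi" unfolding x_def using pi_gt_zero
      by (metis mult_less_cancel_left_pos mult_pos_pos mult.right_neutral times_divide_eq_right)
  qed
  have sabs: "\<And>k. 0 < k \<Longrightarrow> k < N \<Longrightarrow> \<bar>sin (x k)\<bar> = sin (x k)"
    using xr by (simp add: sin_gt_zero less_imp_le)
  have ex: "x ka = x kb + x kc + x kd - j*pi"
  proof -
    have h: "real_of_int ka = kb+kc+kd - j*N" using e by simp
    have "x ka = pi * (real_of_int kb + kc + kd - j*N) / N" unfolding x_def using h by simp
    also have "\<dots> = x kb + x kc + x kd - j*pi" unfolding x_def using Np by (simp add: field_simps)
    finally show ?thesis .
  qed
  have C: "sin (x ka)*sin (x kb)*sin (x kc)*sin (x kd) \<le> (sin (x kb) + sin (x kc) + sin (x kd) - sin (x ka))^2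
     * (1 + 1300/(max (x kb) (x kc))^2 + 1300/(max (pi-x kb) (pi-x kc))^2)"
    by (rule core[of _ _ _ _ j]) (use xr[OF r(1) r(2)] xr[OF r(3) r(4)] xr[OF r(5) r(6)] xr[OF r(7) r(8)] ex j in auto)
  have M1: "real_of_int (max kb kc) / N \<le> max (x kb) (x kc)"
    using lin_le_pi[of "real_of_int kb" N] lin_le_pi[of "real_of_int kc" N] r Np unfolding x_def
    by (cases "kb \<le> kc") (auto simp: max_def)
  have M2: "real_of_int (max (N-kb) (N-kc)) / N \<le> max (pi - x kb) (pi - x kc)"
  proof -
    have "pi - x k = pi * real_of_int (N-k) / N" for k unfolding x_def using Np by (simp add: field_simps)
    thus ?thesis
      using lin_le_pi[of "real_of_int (N-kb)" N] lin_le_pi[of "real_of_int (N-kc)" N] r Np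
      by (cases "kb \<le> kc") (auto simp: max_def)
  qed
  have p1: "0 < real_of_int (max kb kc) / N" using r Np by auto
  have p2: "0 < real_of_int (max (N-kb) (N-kc)) / N" using r Np by auto
  have "1300/(max (x kb) (x kc))^2 \<le> 1300/(real_of_int (max kb kc) / N)^2" by (rule inv_sq_le[OF p1 M1])
  moreover have "1300/(max (pi-x kb) (pi-x kc))^2 \<le> 1300/(real_of_int (max (N-kb) (N-kc)) / N)^2" by (rule inv_sq_le[OF p2 M2])
  ultimately have G: "1 + 1300/(max (x kb) (x kc))^2 + 1300/(max (pi-x kb) (pi-x kc))^2 \<le> gg N kb kc"
    unfolding gg_def by (simp add: power_divide)
  have "sin (x ka)*sin (x kb)*sin (x kc)*sin (x kd) \<le> (sin (x kb) + sin (x kc) + sin (x kd) - sin (x ka))^2 * gg N kb kc"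
    using C G by (meson mult_left_mono order_trans zero_le_power2)
  thus ?thesis using sabs r unfolding x_def by simp
qed
lemma sgn_sq_le: "(sgn (x::real))^2 \<le> 1"
  by (auto simp: sgn_if)

lemma iota_sq_le: "(iota N x)^2 \<le> 1"
  unfolding iota_def by (rule sgn_sq_le)

lemma prod4_sq_le: fixes a b c d :: real
  assumes "a^2 \<le> 1" "b^2 \<le> 1" "c^2 \<le> 1" "d^2 \<le> 1" shows "(a*b*c*d)^2 \<le> 1"
proof -
  have "(a*b*c*d)^2 = a^2*b^2*c^2*d^2" by (simp add: power_mult_distrib)
  also have "\<dots> \<le> 1*1*1*1" using assms by (intro mult_mono) auto
  finally show ?thesis by simp
qed

lemma omega_nonneg: assumes "\<kappa> > 0" "m > 0" shows "omega \<kappa> m N k \<ge> 0"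
  unfolding omega_def using assms by simp

lemma T_sq_gen: fixes \<kappa> i1 i2 i3 i4 w1 w2 w3 w4 :: real
  assumes "\<kappa> > 0" "i1^2 \<le> 1" "i2^2 \<le> 1" "i3^2 \<le> 1" "i4^2 \<le> 1" "w1 \<ge> 0" "w2 \<ge> 0" "w3 \<ge> 0" "w4 \<ge> 0"
  shows "(- 3 / (4 * \<kappa>^2) * i1 * i2 * i3 * i4 * sqrt w1 * sqrt w2 * sqrt w3 * sqrt w4)^2 \<le> 9/(16*\<kappa>^4) * (w1*w2*w3*w4)"
proof -
  define I where "I = i1*i2*i3*i4"
  have I2: "I^2 \<le> 1" unfolding I_def using assms by (intro prod4_sq_le) auto
  have "(- 3 / (4 * \<kappa>^2) * i1 * i2 * i3 * i4 * sqrt w1 * sqrt w2 * sqrt w3 * sqrt w4)^2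
     = (- 3 / (4 * \<kappa>^2))^2 * I^2 * (sqrt w1)^2 * (sqrt w2)^2 * (sqrt w3)^2 * (sqrt w4)^2"
    unfolding I_def by (simp only: power_mult_distrib mult.assoc)
  also have "\<dots> = 9/(16*\<kappa>^4) * I^2 * (w1*w2*w3*w4)" using assms
    by (simp add: power_divide power_mult_distrib)
  also have "\<dots> \<le> 9/(16*\<kappa>^4) * 1 * (w1*w2*w3*w4)"
    using assms I2 by (intro mult_right_mono mult_left_mono) auto
  finally show ?thesis by simp
qed

lemma Tc_sq: assumes "\<kappa> > 0" "m > 0"
  shows "(Tc \<kappa> m N k1 k2 k3 k4)^2 \<le> 9/(16*\<kappa>^4) * (omega \<kappa> m N k1 * omega \<kappa> m N k2 * omega \<kappa> m N k3 * omega \<kappa> m N k4)"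
  unfolding Tc_def
  by (rule T_sq_gen) (use assms omega_nonneg in \<open>auto intro!: prod4_sq_le iota_sq_le\<close>)

lemma Tm_sq: assumes "\<kappa> > 0" "m > 0"
  shows "(Tm \<kappa> m N k1 k2 k3 k4)^2 \<le> 9/(16*\<kappa>^4) * (omega \<kappa> m N k1 * omega \<kappa> m N k2 * omega \<kappa> m N k3 * omega \<kappa> m N k4)"
  unfolding Tm_def
  by (rule T_sq_gen) (use assms omega_nonneg in \<open>auto intro!: prod4_sq_le iota_sq_le\<close>)

lemma gen: fixes T D E c \<kappa> G s1 s2 s3 s4 :: real
  assumes c: "c > 0" and k: "\<kappa> > 0"
    and T: "T^2 \<le> 9/(16*\<kappa>^4) * ((2*c*s1)*(2*c*s2)*(2*c*s3)*(2*c*s4))"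
    and D: "D^2 = (2*c)^2 * E^2" and P: "s1*s2*s3*s4 \<le> E^2 * G" and G: "G \<ge> 0"
  shows "(T/D)^2 \<le> 9*c^2/(4*\<kappa>^4) * G"
proof (cases "E = 0")
  case True
  hence "D = 0" using D by simp
  thus ?thesis using G k by simp
next
  case False
  hence E2: "E^2 > 0" by simp
  have PP: "(2*c*s1)*(2*c*s2)*(2*c*s3)*(2*c*s4) = 16*c^4*(s1*s2*s3*s4)"
    by (simp add: eval_nat_numeral algebra_simps)
  have "(T/D)^2 = T^2/D^2" by (simp add: power_divide)
  also have "\<dots> \<le> (9/(16*\<kappa>^4) * (16*c^4*(s1*s2*s3*s4)))/D^2"
  proof -
    have "T^2 \<le> 9/(16*\<kappa>^4) * (16*c^4*(s1*s2*s3*s4))" using T by (simp only: PP)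
    thus ?thesis by (intro divide_right_mono) auto
  qed
  also have "\<dots> = 9*c^2/(4*\<kappa>^4) * ((s1*s2*s3*s4)/E^2)"
    unfolding D using c False k by (simp add: field_simps eval_nat_numeral)
  also have "\<dots> \<le> 9*c^2/(4*\<kappa>^4) * G"
    using P E2 by (intro mult_left_mono) (auto simp: pos_divide_le_eq mult.commute)
  finally show ?thesis .
qed

lemma small_dvd: fixes N c c' :: int
  assumes "N dvd (c - c')" "0 < c" "c < N" "0 < c'" "c' < N" shows "c = c'"
proof -
  obtain q where q: "c - c' = N*q" using assms(1) by (auto simp: dvd_def)
  have N0: "N > 0" using assms by simp
  have "N*q < N" using q assms by linarith
  hence "N*q < N*1" by simp
  hence "q < 1" using N0 mult_less_cancel_left_pos by blast
  moreover have "-N < N*q" using q assms by linarith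
  hence "N*(-1) < N*q" by simp
  hence "-1 < q" using N0 mult_less_cancel_left_pos by blast
  ultimately have "q = 0" by simp
  thus ?thesis using q by simp
qed
lemma sin_abs_le1: "\<bar>sin (x::real)\<bar> \<le> 1" by (rule abs_sin_le_one)

lemma A1_term: fixes N k1 k2 k3 k4 :: int
  assumes k: "\<kappa> > 0" and m: "m > 0" and N: "N \<ge> 2"
    and r: "0<k1" "k1<N" "0<k2" "k2<N" "0<k3" "k3<N" "0<k4" "k4<N"
    and md: "(k1 - k2 - k3 - k4) mod N = 0"
  shows "\<bar>A1 \<kappa> m N k1 k2 k3 k4\<bar>^2 \<le> 9*(\<kappa>/m)/(4*\<kappa>^4) * gg N k2 k3"
proof -
  define c where "c = sqrt (\<kappa>/m)"
  have c0: "c > 0" and c2: "c^2 = \<kappa>/m" using k m unfolding c_def by auto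
  define s where "s = (\<lambda>k::int. \<bar>sin (pi * real_of_int k / real_of_int N)\<bar>)"
  have om: "\<And>k. omega \<kappa> m N k = 2*c*s k" unfolding omega_def c_def s_def by simp
  obtain q where q: "k1 - k2 - k3 - k4 = N*q" using md by (auto simp: mod_eq_0_iff_dvd dvd_def)
  have N0: "N > 0" using N by simp
  have "N*q < N" using q r by linarith
  hence "N*q < N*1" by simp
  hence q1: "q < 1" using N0 mult_less_cancel_left_pos by blast
  have "-3*N < N*q" using q r by linarith
  hence "N*(-3) < N*q" by simp
  hence q2: "-3 < q" using N0 mult_less_cancel_left_pos by blast
  define j where "j = -q"
  have j: "j=0 \<or> j=1 \<or> j=2" using q1 q2 j_def by auto
  have e: "k1 = k2+k3+k4 - j*N" using q j_def by (simp add: algebra_simps)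
  have KC: "s k1 * s k2 * s k3 * s k4 \<le> (s k2 + s k3 + s k4 - s k1)^2 * gg N k2 k3"
    unfolding s_def by (rule kcore[OF N r e j])
  have D: "(omega \<kappa> m N k1 - omega \<kappa> m N k2 - omega \<kappa> m N k3 - omega \<kappa> m N k4)^2
      = (2*c)^2 * (s k2 + s k3 + s k4 - s k1)^2"
    unfolding om by (simp add: power2_eq_square algebra_simps)
  have T: "(Tc \<kappa> m N k1 k2 k3 k4)^2 \<le> 9/(16*\<kappa>^4) * ((2*c*s k1)*(2*c*s k2)*(2*c*s k3)*(2*c*s k4))"
    using Tc_sq[OF k m, of N k1 k2 k3 k4] unfolding om .
  have "(Tc \<kappa> m N k1 k2 k3 k4 / (omega \<kappa> m N k1 - omega \<kappa> m N k2 - omega \<kappa> m N k3 - omega \<kappa> m N k4))^2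
     \<le> 9*c^2/(4*\<kappa>^4) * gg N k2 k3"
    by (rule gen[OF c0 k T D KC]) (rule order_trans[OF zero_le_one gg_ge1])
  thus ?thesis unfolding A1_def power2_abs minus_divide_left[symmetric] power2_minus c2 .
qed

lemma A2_term: fixes N k1 k2 k3 k4 :: int
  assumes k: "\<kappa> > 0" and m: "m > 0" and N: "N \<ge> 2"
    and r: "0<k1" "k1<N" "0<k2" "k2<N" "0<k3" "k3<N" "0<k4" "k4<N"
    and md: "(k1 - k2 + k3 + k4) mod N = 0"
  shows "\<bar>A2 \<kappa> m N k1 k2 k3 k4\<bar>^2 \<le> 9*(\<kappa>/m)/(4*\<kappa>^4) * gg N k3 k4"
proof -
  define c where "c = sqrt (\<kappa>/m)"
  have c0: "c > 0" and c2: "c^2 = \<kappa>/m" using k m unfolding c_def by auto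
  define s where "s = (\<lambda>k::int. \<bar>sin (pi * real_of_int k / real_of_int N)\<bar>)"
  have om: "\<And>k. omega \<kappa> m N k = 2*c*s k" unfolding omega_def c_def s_def by simp
  obtain q where q: "k1 - k2 + k3 + k4 = N*q" using md by (auto simp: mod_eq_0_iff_dvd dvd_def)
  have N0: "N > 0" using N by simp
  have "N*q < 3*N" using q r by linarith
  hence "N*q < N*3" by (simp add: mult.commute)
  hence q1: "q < 3" using N0 mult_less_cancel_left_pos by blast
  have "-N < N*q" using q r by linarith
  hence "N*(-1) < N*q" by simp
  hence q2: "-1 < q" using N0 mult_less_cancel_left_pos by blast
  have j: "q=0 \<or> q=1 \<or> q=2" using q1 q2 by auto
  have e: "k2 = k3+k4+k1 - q*N" using q by (simp add: algebra_simps)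
  have KC0: "s k2 * s k3 * s k4 * s k1 \<le> (s k3 + s k4 + s k1 - s k2)^2 * gg N k3 k4"
    unfolding s_def by (rule kcore[OF N r(3-8) r(1-2) e j])
  have KC: "s k1 * s k2 * s k3 * s k4 \<le> (s k3 + s k4 + s k1 - s k2)^2 * gg N k3 k4"
    using KC0 by (simp add: mult_ac)
  have D: "(omega \<kappa> m N k1 - omega \<kappa> m N k2 + omega \<kappa> m N k3 + omega \<kappa> m N k4)^2
      = (2*c)^2 * (s k3 + s k4 + s k1 - s k2)^2"
    unfolding om by (simp add: power2_eq_square algebra_simps)
  have T: "(Tm \<kappa> m N k1 k2 k3 k4)^2 \<le> 9/(16*\<kappa>^4) * ((2*c*s k1)*(2*c*s k2)*(2*c*s k3)*(2*c*s k4))"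
    using Tm_sq[OF k m, of N k1 k2 k3 k4] unfolding om .
  have "(Tm \<kappa> m N k1 k2 k3 k4 / (omega \<kappa> m N k1 - omega \<kappa> m N k2 + omega \<kappa> m N k3 + omega \<kappa> m N k4))^2
     \<le> 9*c^2/(4*\<kappa>^4) * gg N k3 k4"
    by (rule gen[OF c0 k T D KC]) (rule order_trans[OF zero_le_one gg_ge1])
  thus ?thesis unfolding A2_def power2_abs minus_divide_left[symmetric] power2_minus c2 .
qed

lemma A3_term: fixes N k1 k2 k3 k4 :: int
  assumes k: "\<kappa> > 0" and m: "m > 0"
  shows "\<bar>A3 \<kappa> m N k1 k2 k3 k4\<bar>^2 \<le> 9*(\<kappa>/m)/(4*\<kappa>^4) * gg N k2 k3"
proof -
  define c where "c = sqrt (\<kappa>/m)"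
  have c0: "c > 0" and c2: "c^2 = \<kappa>/m" using k m unfolding c_def by auto
  define s where "s = (\<lambda>k::int. \<bar>sin (pi * real_of_int k / real_of_int N)\<bar>)"
  have om: "\<And>k. omega \<kappa> m N k = 2*c*s k" unfolding omega_def c_def s_def by simp
  have s01: "\<And>k. 0 \<le> s k \<and> s k \<le> 1" unfolding s_def using sin_abs_le1 by auto
  define E where "E = s k1 + s k2 + s k3 + s k4"
  have "s k3 * s k4 \<le> 1" using s01 by (simp add: mult_le_one)
  hence "s k1 * s k2 * (s k3 * s k4) \<le> s k1 * s k2 * 1"
    using s01 by (intro mult_left_mono) auto
  hence "s k1 * s k2 * s k3 * s k4 \<le> s k1 * s k2 * 1" by (simp add: mult.assoc)
  also have "\<dots> \<le> E * E"
  proof -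
    have "s k1 \<le> E" "s k2 \<le> E" "0 \<le> s k2" "0 \<le> E"
      using s01[of k1] s01[of k2] s01[of k3] s01[of k4] unfolding E_def by linarith+
    thus ?thesis by (simp add: mult_mono)
  qed
  also have "\<dots> \<le> E^2 * gg N k2 k3" using gg_ge1[of N k2 k3]
    by (simp add: power2_eq_square mult_le_cancel_left1)
  finally have KC: "s k1 * s k2 * s k3 * s k4 \<le> E^2 * gg N k2 k3" .
  have D: "(omega \<kappa> m N k1 + omega \<kappa> m N k2 + omega \<kappa> m N k3 + omega \<kappa> m N k4)^2
      = (2*c)^2 * E^2"
    unfolding om E_def by (simp add: power2_eq_square algebra_simps)
  have T: "(Tc \<kappa> m N k1 k2 k3 k4)^2 \<le> 9/(16*\<kappa>^4) * ((2*c*s k1)*(2*c*s k2)*(2*c*s k3)*(2*c*s k4))"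
    using Tc_sq[OF k m, of N k1 k2 k3 k4] unfolding om .
  have "(Tc \<kappa> m N k1 k2 k3 k4 / (omega \<kappa> m N k1 + omega \<kappa> m N k2 + omega \<kappa> m N k3 + omega \<kappa> m N k4))^2
     \<le> 9*c^2/(4*\<kappa>^4) * gg N k2 k3"
    by (rule gen[OF c0 k T D KC]) (rule order_trans[OF zero_le_one gg_ge1])
  thus ?thesis unfolding A3_def power2_abs minus_divide_left[symmetric] power2_minus c2 .
qed
lemma sum_proj: fixes F :: "'a \<Rightarrow> real" and g :: "'b \<Rightarrow> real"
  assumes inj: "inj_on h S" and sub: "h ` S \<subseteq> P" and fP: "finite P"
    and le: "\<And>x. x \<in> S \<Longrightarrow> F x \<le> g (h x)" and nn: "\<And>y. y \<in> P \<Longrightarrow> 0 \<le> g y"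
  shows "sum F S \<le> sum g P"
proof -
  have "finite (h ` S)" using finite_subset[OF sub fP] .
  hence fS: "finite S" using finite_imageD inj by blast
  have "sum F S \<le> sum (g \<circ> h) S" using le by (intro sum_mono) auto
  also have "\<dots> = sum g (h ` S)" by (rule sum.reindex[OF inj, symmetric])
  also have "\<dots> \<le> sum g P" using sub fP nn by (intro sum_mono2) auto
  finally show ?thesis .
qed

lemma refl_sum: fixes N :: int and f :: "int \<Rightarrow> real"
  shows "(\<Sum>c\<in>{1..N-1}. f (N-c)) = (\<Sum>c\<in>{1..N-1}. f c)"
  by (rule sum.reindex_bij_witness[of _ "\<lambda>c. N-c" "\<lambda>c. N-c"]) auto

lemma gg_sum: fixes N :: int assumes N: "N \<ge> 2"
  shows "(\<Sum>y\<in>{1..N-1}\<times>{1..N-1}. gg N (fst y) (snd y)) \<le> 5201*(real_of_int N)^2 + 5200*(real_of_int N)^2*ln (real_of_int N)"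
proof -
  define A where "A = {1..N-1}"
  define Q where "Q = (\<Sum>b\<in>A. \<Sum>c\<in>A. 1/(real_of_int (max b c))^2)"
  define Q' where "Q' = (\<Sum>b\<in>A. \<Sum>c\<in>A. 1/(real_of_int (max (N-b) (N-c)))^2)"
  define n where "n = nat (N-1)"
  have n1: "n \<ge> 1" and nN: "int n = N-1" using N n_def by auto
  have "Q \<le> 2 + 2*ln n" unfolding Q_def A_def using Q_bound[OF n1] nN by simp
  also have "ln (real n) \<le> ln (real_of_int N)"
  proof -
    have "real n = real_of_int N - 1" using nN by (metis of_int_of_nat_eq of_int_diff of_int_1)
    thus ?thesis using n1 by simp
  qed
  hence "2 + 2*ln n \<le> 2 + 2*ln (real_of_int N)" by simp
  finally have Qb: "Q \<le> 2 + 2*ln (real_of_int N)" .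
  have inner: "(\<Sum>c\<in>A. 1/(real_of_int (max (N-b) (N-c)))^2) = (\<Sum>c\<in>A. 1/(real_of_int (max (N-b) c))^2)" for b
    unfolding A_def by (rule refl_sum[where N=N and f="\<lambda>c. 1/(real_of_int (max (N-b) c))^2"])
  have "Q' = (\<Sum>b\<in>A. \<Sum>c\<in>A. 1/(real_of_int (max (N-b) c))^2)"
    unfolding Q'_def using inner by simp
  also have "\<dots> = Q" unfolding Q_def A_def by (rule refl_sum[where N=N and f="\<lambda>b. \<Sum>c\<in>{1..N-1}. 1/(real_of_int (max b c))^2"])
  finally have QQ: "Q' = Q" .
  have "(\<Sum>y\<in>A\<times>A. gg N (fst y) (snd y)) = (\<Sum>b\<in>A. \<Sum>c\<in>A. gg N b c)"
    by (simp add: sum.cartesian_product split_def)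
  also have "\<dots> = (\<Sum>b\<in>A. \<Sum>c\<in>A. (1::real)) + 1300*(real_of_int N)^2 * Q + 1300*(real_of_int N)^2 * Q'"
    unfolding gg_def Q_def Q'_def by (simp add: sum.distrib sum_distrib_left)
  also have "(\<Sum>b\<in>A. \<Sum>c\<in>A. (1::real)) = (real_of_int N - 1)^2"
    unfolding A_def using N by (simp add: power2_eq_square)
  also have "(real_of_int N - 1)^2 \<le> (real_of_int N)^2" using N by (intro power_mono) auto
  finally have "(\<Sum>y\<in>A\<times>A. gg N (fst y) (snd y)) \<le> (real_of_int N)^2 + 2600*(real_of_int N)^2 * Q"
    unfolding QQ by (simp add: algebra_simps)
  also have "\<dots> \<le> (real_of_int N)^2 + 2600*(real_of_int N)^2 * (2 + 2*ln (real_of_int N))"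
    using Qb by (intro add_left_mono mult_left_mono) auto
  also have "\<dots> = 5201*(real_of_int N)^2 + 5200*(real_of_int N)^2*ln (real_of_int N)"
    by (simp add: algebra_simps)
  finally show ?thesis unfolding A_def .
qed
lemma inj1: fixes N k1 :: int
  shows "inj_on (\<lambda>(k2, k3, k4). (k2, k3)) {(k2, k3, k4). 0 < k2 \<and> k2 < N \<and> 0 < k3 \<and> k3 < N \<and> 0 < k4 \<and> k4 < N \<and> (k1 - k2 - k3 - k4) mod N = 0}"
proof (rule inj_onI)
  fix x y assume x: "x \<in> {(k2, k3, k4). 0 < k2 \<and> k2 < N \<and> 0 < k3 \<and> k3 < N \<and> 0 < k4 \<and> k4 < N \<and> (k1 - k2 - k3 - k4) mod N = 0}" and y: "y \<in> {(k2, k3, k4). 0 < k2 \<and> k2 < N \<and> 0 < k3 \<and> k3 < N \<and> 0 < k4 \<and> k4 < N \<and> (k1 - k2 - k3 - k4) mod N = 0}" and e: "(\<lambda>(k2, k3, k4). (k2, k3)) x = (\<lambda>(k2, k3, k4). (k2, k3)) y"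
  obtain a b c where xx: "x = (a,b,c)" by (cases x) auto
  obtain a' b' c' where yy: "y = (a',b',c')" by (cases y) auto
  have X: "0 < a \<and> a < N \<and> 0 < b \<and> b < N \<and> 0 < c \<and> c < N" and dx: "N dvd (k1 - a - b - c)"
    using x unfolding xx by (auto simp: mod_eq_0_iff_dvd)
  have Y: "0 < a' \<and> a' < N \<and> 0 < b' \<and> b' < N \<and> 0 < c' \<and> c' < N" and dy0: "N dvd (k1 - a' - b' - c')"
    using y unfolding yy by (auto simp: mod_eq_0_iff_dvd)
  have eq: "a = a'" "b = b'" using e unfolding xx yy by auto
  hence dy: "N dvd (k1 - a - b - c')" using dy0 by simp
  have "N dvd ((k1 - a - b - c) - (k1 - a - b - c'))" using dx dy by (rule dvd_diff)
  moreover have "(k1 - a - b - c) - (k1 - a - b - c') = c' - c" using eq by simp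
  ultimately have "N dvd (c' - c)" by simp
  hence "c' = c" using X Y by (intro small_dvd) auto
  thus "x = y" unfolding xx yy using eq by simp
qed

lemma inj2: fixes N k1 :: int
  shows "inj_on (\<lambda>(k2, k3, k4). (k3, k4)) {(k2, k3, k4). 0 < k2 \<and> k2 < N \<and> 0 < k3 \<and> k3 < N \<and> 0 < k4 \<and> k4 < N \<and> (k1 - k2 + k3 + k4) mod N = 0}"
proof (rule inj_onI)
  fix x y assume x: "x \<in> {(k2, k3, k4). 0 < k2 \<and> k2 < N \<and> 0 < k3 \<and> k3 < N \<and> 0 < k4 \<and> k4 < N \<and> (k1 - k2 + k3 + k4) mod N = 0}" and y: "y \<in> {(k2, k3, k4). 0 < k2 \<and> k2 < N \<and> 0 < k3 \<and> k3 < N \<and> 0 < k4 \<and> k4 < N \<and> (k1 - k2 + k3 + k4) mod N = 0}" and e: "(\<lambda>(k2, k3, k4). (k3, k4)) x = (\<lambda>(k2, k3, k4). (k3, k4)) y"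
  obtain a b c where xx: "x = (a,b,c)" by (cases x) auto
  obtain a' b' c' where yy: "y = (a',b',c')" by (cases y) auto
  have X: "0 < a \<and> a < N \<and> 0 < b \<and> b < N \<and> 0 < c \<and> c < N" and dx: "N dvd (k1 - a + b + c)"
    using x unfolding xx by (auto simp: mod_eq_0_iff_dvd)
  have Y: "0 < a' \<and> a' < N \<and> 0 < b' \<and> b' < N \<and> 0 < c' \<and> c' < N" and dy0: "N dvd (k1 - a' + b' + c')"
    using y unfolding yy by (auto simp: mod_eq_0_iff_dvd)
  have eq: "b = b'" "c = c'" using e unfolding xx yy by auto
  hence dy: "N dvd (k1 - a' + b + c)" using dy0 by simp
  have "N dvd ((k1 - a + b + c) - (k1 - a' + b + c))" using dx dy by (rule dvd_diff)
  moreover have "(k1 - a + b + c) - (k1 - a' + b + c) = a' - a" by simp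
  ultimately have "N dvd (a' - a)" by simp
  hence "a' = a" using X Y by (intro small_dvd) auto
  thus "x = y" unfolding xx yy using eq by simp
qed

lemma inj3: fixes N k1 :: int
  shows "inj_on (\<lambda>(k2, k3, k4). (k2, k3)) {(k2, k3, k4). 0 < k2 \<and> k2 < N \<and> 0 < k3 \<and> k3 < N \<and> 0 < k4 \<and> k4 < N \<and> (k1 + k2 + k3 + k4) mod N = 0}"
proof (rule inj_onI)
  fix x y assume x: "x \<in> {(k2, k3, k4). 0 < k2 \<and> k2 < N \<and> 0 < k3 \<and> k3 < N \<and> 0 < k4 \<and> k4 < N \<and> (k1 + k2 + k3 + k4) mod N = 0}" and y: "y \<in> {(k2, k3, k4). 0 < k2 \<and> k2 < N \<and> 0 < k3 \<and> k3 < N \<and> 0 < k4 \<and> k4 < N \<and> (k1 + k2 + k3 + k4) mod N = 0}" and e: "(\<lambda>(k2, k3, k4). (k2, k3)) x = (\<lambda>(k2, k3, k4). (k2, k3)) y"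
  obtain a b c where xx: "x = (a,b,c)" by (cases x) auto
  obtain a' b' c' where yy: "y = (a',b',c')" by (cases y) auto
  have X: "0 < a \<and> a < N \<and> 0 < b \<and> b < N \<and> 0 < c \<and> c < N" and dx: "N dvd (k1 + a + b + c)"
    using x unfolding xx by (auto simp: mod_eq_0_iff_dvd)
  have Y: "0 < a' \<and> a' < N \<and> 0 < b' \<and> b' < N \<and> 0 < c' \<and> c' < N" and dy0: "N dvd (k1 + a' + b' + c')"
    using y unfolding yy by (auto simp: mod_eq_0_iff_dvd)
  have eq: "a = a'" "b = b'" using e unfolding xx yy by auto
  hence dy: "N dvd (k1 + a + b + c')" using dy0 by simp
  have "N dvd ((k1 + a + b + c) - (k1 + a + b + c'))" using dx dy by (rule dvd_diff)
  moreover have "(k1 + a + b + c) - (k1 + a + b + c') = c - c'" using eq by simp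
  ultimately have "N dvd (c - c')" by simp
  hence "c = c'" using X Y by (intro small_dvd) auto
  thus "x = y" unfolding xx yy using eq by simp
qed

lemma sum1: fixes N k1 :: int
  assumes k: "\<kappa> > 0" and m: "m > 0" and N: "N \<ge> 2" and r: "0 < k1" "k1 < N"
  shows "(\<Sum>(k2, k3, k4) \<in> {(k2, k3, k4). 0 < k2 \<and> k2 < N \<and> 0 < k3 \<and> k3 < N \<and> 0 < k4 \<and> k4 < N \<and> (k1 - k2 - k3 - k4) mod N = 0}. \<bar>A1 \<kappa> m N k1 k2 k3 k4\<bar>^2)
    \<le> (\<Sum>y\<in>{1..N-1}\<times>{1..N-1}. 9*(\<kappa>/m)/(4*\<kappa>^4) * gg N (fst y) (snd y))"
  apply (rule sum_proj[OF inj1])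
  subgoal by auto
  subgoal by simp
  subgoal for x using k m N r
    apply (cases x rule: prod_cases3)
    apply (simp only: prod.case fst_conv snd_conv)
    apply (rule A1_term)
    apply auto
    done
  subgoal for y using k m gg_ge1[of N "fst y" "snd y"] by simp
  done

lemma sum2: fixes N k1 :: int
  assumes k: "\<kappa> > 0" and m: "m > 0" and N: "N \<ge> 2" and r: "0 < k1" "k1 < N"
  shows "(\<Sum>(k2, k3, k4) \<in> {(k2, k3, k4). 0 < k2 \<and> k2 < N \<and> 0 < k3 \<and> k3 < N \<and> 0 < k4 \<and> k4 < N \<and> (k1 - k2 + k3 + k4) mod N = 0}. \<bar>A2 \<kappa> m N k1 k2 k3 k4\<bar>^2)
    \<le> (\<Sum>y\<in>{1..N-1}\<times>{1..N-1}. 9*(\<kappa>/m)/(4*\<kappa>^4) * gg N (fst y) (snd y))"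
  apply (rule sum_proj[OF inj2])
  subgoal by auto
  subgoal by simp
  subgoal for x using k m N r
    apply (cases x rule: prod_cases3)
    apply (simp only: prod.case fst_conv snd_conv)
    apply (rule A2_term)
    apply auto
    done
  subgoal for y using k m gg_ge1[of N "fst y" "snd y"] by simp
  done

lemma sum3: fixes N k1 :: int
  assumes k: "\<kappa> > 0" and m: "m > 0" and N: "N \<ge> 2" and r: "0 < k1" "k1 < N"
  shows "(\<Sum>(k2, k3, k4) \<in> {(k2, k3, k4). 0 < k2 \<and> k2 < N \<and> 0 < k3 \<and> k3 < N \<and> 0 < k4 \<and> k4 < N \<and> (k1 + k2 + k3 + k4) mod N = 0}. \<bar>A3 \<kappa> m N k1 k2 k3 k4\<bar>^2)
    \<le> (\<Sum>y\<in>{1..N-1}\<times>{1..N-1}. 9*(\<kappa>/m)/(4*\<kappa>^4) * gg N (fst y) (snd y))"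
  apply (rule sum_proj[OF inj3])
  subgoal by auto
  subgoal by simp
  subgoal for x using k m N r
    apply (cases x rule: prod_cases3)
    apply (simp only: prod.case fst_conv snd_conv)
    apply (rule A3_term)
    apply auto
    done
  subgoal for y using k m gg_ge1[of N "fst y" "snd y"] by simp
  done

theorem theorem1:
  fixes \<kappa> m :: real
  assumes "\<kappa> > 0" and "m > 0"
  shows "\<exists>C>0. \<forall>N::int. \<forall>k1::int. N \<ge> 2 \<longrightarrow> 0 < k1 \<longrightarrow> k1 < N \<longrightarrow>
    (\<Sum>(k2, k3, k4) \<in> {(k2, k3, k4). 0 < k2 \<and> k2 < N \<and> 0 < k3 \<and> k3 < N \<and> 0 < k4 \<and> k4 < N
          \<and> (k1 - k2 - k3 - k4) mod N = 0}.
        \<bar>A1 \<kappa> m N k1 k2 k3 k4\<bar>^2)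
  + (\<Sum>(k2, k3, k4) \<in> {(k2, k3, k4). 0 < k2 \<and> k2 < N \<and> 0 < k3 \<and> k3 < N \<and> 0 < k4 \<and> k4 < N
          \<and> (k1 - k2 + k3 + k4) mod N = 0}.
        \<bar>A2 \<kappa> m N k1 k2 k3 k4\<bar>^2)
  + (\<Sum>(k2, k3, k4) \<in> {(k2, k3, k4). 0 < k2 \<and> k2 < N \<and> 0 < k3 \<and> k3 < N \<and> 0 < k4 \<and> k4 < N
          \<and> (k1 + k2 + k3 + k4) mod N = 0}.
        \<bar>A3 \<kappa> m N k1 k2 k3 k4\<bar>^2)
  \<le> C * (real_of_int N)^2 * ln (real_of_int N)"
proof -
  define K where "K = 9*(\<kappa>/m)/(4*\<kappa>^4)"
  have K0: "K > 0" unfolding K_def using assms by simp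
  have l2: "ln (2::real) > 0" by simp
  define C where "C = 3*K*(5201/ln 2 + 5200)"
  have C0: "C > 0" unfolding C_def using K0 l2 by (simp add: add_pos_pos)
  show ?thesis
  proof (intro exI[of _ C] conjI allI impI)
    show "C > 0" by (rule C0)
  next
    fix N k1 :: int assume N: "N \<ge> 2" and r1: "0 < k1" and r2: "k1 < N"
    define W where "W = (\<Sum>y\<in>{1..N-1}\<times>{1..N-1}. gg N (fst y) (snd y))"
    have KW: "(\<Sum>y\<in>{1..N-1}\<times>{1..N-1}. 9*(\<kappa>/m)/(4*\<kappa>^4) * gg N (fst y) (snd y)) = K * W"
      unfolding W_def K_def by (simp add: sum_distrib_left)
    note s1 = sum1[OF assms N r1 r2, unfolded KW]
    note s2 = sum2[OF assms N r1 r2, unfolded KW]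
    note s3 = sum3[OF assms N r1 r2, unfolded KW]
    define L where "L = ln (real_of_int N)"
    define NN where "NN = (real_of_int N)^2"
    have L2: "L \<ge> ln 2" unfolding L_def using N by simp
    have NN0: "NN \<ge> 0" unfolding NN_def by simp
    have Wb: "W \<le> 5201*NN + 5200*NN*L" unfolding W_def NN_def L_def by (rule gg_sum[OF N])
    have "NN = NN * ln 2 / ln 2" using l2 by simp
    also have "\<dots> \<le> NN * L / ln 2" using L2 NN0 l2 by (intro divide_right_mono mult_left_mono) auto
    finally have NNL: "NN \<le> NN * L / ln 2" .
    have "5201*NN + 5200*NN*L \<le> 5201*(NN*L/ln 2) + 5200*NN*L" using NNL by simp
    also have "\<dots> = (5201/ln 2 + 5200) * NN * L" by (simp add: algebra_simps)
    finally have "W \<le> (5201/ln 2 + 5200) * NN * L" using Wb by linarith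
    hence "3*(K*W) \<le> 3*(K*((5201/ln 2 + 5200) * NN * L))" using K0 by simp
    also have "\<dots> = C * NN * L" unfolding C_def by (simp add: algebra_simps)
    finally have fin: "3*(K*W) \<le> C * NN * L" .
    show "(\<Sum>(k2, k3, k4) \<in> {(k2, k3, k4). 0 < k2 \<and> k2 < N \<and> 0 < k3 \<and> k3 < N \<and> 0 < k4 \<and> k4 < N
          \<and> (k1 - k2 - k3 - k4) mod N = 0}.
        \<bar>A1 \<kappa> m N k1 k2 k3 k4\<bar>^2)
  + (\<Sum>(k2, k3, k4) \<in> {(k2, k3, k4). 0 < k2 \<and> k2 < N \<and> 0 < k3 \<and> k3 < N \<and> 0 < k4 \<and> k4 < N
          \<and> (k1 - k2 + k3 + k4) mod N = 0}.
        \<bar>A2 \<kappa> m N k1 k2 k3 k4\<bar>^2)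
  + (\<Sum>(k2, k3, k4) \<in> {(k2, k3, k4). 0 < k2 \<and> k2 < N \<and> 0 < k3 \<and> k3 < N \<and> 0 < k4 \<and> k4 < N
          \<and> (k1 + k2 + k3 + k4) mod N = 0}.
        \<bar>A3 \<kappa> m N k1 k2 k3 k4\<bar>^2)
  \<le> C * (real_of_int N)^2 * ln (real_of_int N)"
      using s1 s2 s3 fin unfolding NN_def L_def by linarith
  qed
qed

end
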